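(* Let $n\ge1$ be an integer and let $(V,\|\cdot\|_{4n})$ be a normed plane whose unit circle is an affine regular $4n$-gon. Then $$c_B(\|\cdot\|_{4n})=\Big(\cos\frac{\pi}{4n}\Big)^2.$$
   Context: A normed (Minkowski) plane $(V,\|\cdot\|)$ is a two-dimensional real vector space with a norm; $o$ is the origin, $B=\{v:\|v\|\le1\}$ the unit ball, $S=\{v:\|v\|=1\}$ the unit circle. An affine regular $m$-gon centered at $o$ is the image of a Euclidean regular $m$-gon centered at the origin under a linear bijection. For distinct $x,y$, $\mathrm{bis}(x,y)=\{z\in V:\|z-x\|=\|z-y\|\}$. For $x\in S$, the inner projection is $\mathrm{P_I}(x)=\{z/\|z\|: z\in(\mathrm{bis}(-x,x)\cap B)\setminus\{o\}\}$. The sine function is $s:S\times S\to\mathbb{R}$, $s(u,v)=\inf_{t\in\mathbb{R}}\|u+tv\|$. The constant $c_B$ is $c_B(\|\cdot\|)=\inf_{x\in S}\ \inf_{w\in\mathrm{P_I}(x)} s(w,x)$. *)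

theory Defs
  imports "HOL-Analysis.Analysis"
begin

definition is_norm :: "(real^2 \<Rightarrow> real) \<Rightarrow> bool" where
  "is_norm N \<longleftrightarrow> (\<forall>v. N v \<ge> 0) \<and> (\<forall>v. N v = 0 \<longleftrightarrow> v = 0)
     \<and> (\<forall>c v. N (c *\<^sub>R v) = \<bar>c\<bar> * N v) \<and> (\<forall>u v. N (u + v) \<le> N u + N v)"

definition unit_ball :: "(real^2 \<Rightarrow> real) \<Rightarrow> (real^2) set" where
  "unit_ball N = {v. N v \<le> 1}"

definition unit_circle :: "(real^2 \<Rightarrow> real) \<Rightarrow> (real^2) set" where
  "unit_circle N = {v. N v = 1}"

definition reg_vertex :: "nat \<Rightarrow> nat \<Rightarrow> real^2" where
  "reg_vertex m k = vector [cos (2 * pi * real k / real m), sin (2 * pi * real k / real m)]"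

definition regular_polygon :: "nat \<Rightarrow> (real^2) set" where
  "regular_polygon m = (\<Union>k<m. closed_segment (reg_vertex m k) (reg_vertex m (Suc k)))"

definition affine_regular_polygon :: "nat \<Rightarrow> (real^2) set \<Rightarrow> bool" where
  "affine_regular_polygon m P \<longleftrightarrow>
     (\<exists>T :: real^2 \<Rightarrow> real^2. linear T \<and> bij T \<and> P = T ` regular_polygon m)"

definition bis :: "(real^2 \<Rightarrow> real) \<Rightarrow> real^2 \<Rightarrow> real^2 \<Rightarrow> (real^2) set" where
  "bis N x y = {z. N (z - x) = N (z - y)}"

definition inner_proj :: "(real^2 \<Rightarrow> real) \<Rightarrow> real^2 \<Rightarrow> (real^2) set" where
  "inner_proj N x = {(1 / N z) *\<^sub>R z | z. z \<in> (bis N (-x) x \<inter> unit_ball N) - {0}}"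

definition sine_fn :: "(real^2 \<Rightarrow> real) \<Rightarrow> real^2 \<Rightarrow> real^2 \<Rightarrow> real" where
  "sine_fn N u v = (INF t\<in>(UNIV::real set). N (u + t *\<^sub>R v))"

definition c_B :: "(real^2 \<Rightarrow> real) \<Rightarrow> real" where
  "c_B N = (INF x\<in>unit_circle N. INF w\<in>inner_proj N x. sine_fn N w x)"

end

theory Submission
  imports Defs
begin


lemma core_poly:
  fixes s c t u :: real
  assumes "s > 0" "c > 0" "c^2 + s^2 = 1" "s \<le> c" "\<bar>t\<bar> \<le> s" "\<bar>u\<bar> \<le> s"
  shows "c * \<bar>t^2 - u^2\<bar> \<le> 2* s*((c^2+t*u)*(2* s*c) + c*(u-t)*(c^2-s^2))"
proof -
  have e: "2* s*((c^2+t*u)*(2* s*c) + c*(u-t)*(c^2-s^2)) = c*(2* s^2 + 2*t*u + 2*(c^2-s^2)*((s-t)*(s+u)))"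
    using assms(3) by algebra
  have k: "c^2 - s^2 \<ge> 0" using assms by (simp add: power_mono)
  have p: "(s-t)*(s+u) \<ge> 0" using assms by (intro mult_nonneg_nonneg) auto
  have q: "(c^2-s^2)*((s-t)*(s+u)) \<ge> 0" using k p by simp
  have st: "t^2 \<le> s^2" "u^2 \<le> s^2" using power_mono[of "\<bar>t\<bar>" s 2] power_mono[of "\<bar>u\<bar>" s 2] assms by auto
  have "\<bar>t^2 - u^2\<bar> \<le> 2* s^2 + 2*t*u"
  proof -
    have "(t+u)^2 = t^2 + 2*t*u + u^2" by algebra
    moreover have "(t+u)^2 \<ge> 0" by simp
    ultimately have "t^2-u^2 \<le> 2* s^2+2*t*u" "u^2-t^2 \<le> 2* s^2+2*t*u" using st by linarith+
    then show ?thesis by linarith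
  qed
  then have "\<bar>t^2 - u^2\<bar> \<le> 2* s^2 + 2*t*u + 2*(c^2-s^2)*((s-t)*(s+u))" using q by linarith
  then show ?thesis unfolding e using assms(2) by (simp add: mult_left_mono)
qed

lemma core_G:
  fixes s c t u S C :: real
  assumes "s > 0" "c > 0" "c^2 + s^2 = 1" "s \<le> c" "\<bar>t\<bar> \<le> s" "\<bar>u\<bar> \<le> s"
    and "S \<ge> 2* s*c" "C \<le> c^2 - s^2" "-(c^2-s^2) \<le> C"
  shows "c * \<bar>t^2 - u^2\<bar> \<le> 2* s*((c^2+t*u)*S + c*(u-t)*C)"
proof -
  have "\<bar>t*u\<bar> \<le> s* s" using assms by (simp add: abs_mult mult_mono)
  moreover have "s* s \<le> c^2" using assms by (simp add: power2_eq_square mult_mono)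
  ultimately have P0: "c^2 + t*u \<ge> 0" by linarith
  have A: "(c^2+t*u)*S \<ge> (c^2+t*u)*(2* s*c)" using P0 assms(7) by (simp add: mult_left_mono)
  show ?thesis
  proof (cases "u \<le> t")
    case True
    have "c*(u-t)*C \<ge> c*(u-t)*(c^2-s^2)"
      using True assms(2,8) by (simp add: mult_left_mono_neg mult_nonneg_nonpos)
    then have "(c^2+t*u)*S + c*(u-t)*C \<ge> (c^2+t*u)*(2* s*c) + c*(u-t)*(c^2-s^2)" using A by linarith
    then show ?thesis using core_poly[OF assms(1-6)] assms(1) by (smt (verit) mult_left_mono)
  next
    case False
    have "c*(u-t)*C \<ge> c*(t-u)*(c^2-s^2)"
    proof -
      have "c*(u-t) \<ge> 0" using False assms(2) by simp
      then have "c*(u-t)*C \<ge> c*(u-t)*(-(c^2-s^2))" using assms(9) by (simp add: mult_left_mono)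
      then show ?thesis by (simp add: algebra_simps)
    qed
    then have "(c^2+t*u)*S + c*(u-t)*C \<ge> (c^2+u*t)*(2* s*c) + c*(t-u)*(c^2-s^2)" using A by (simp add: mult.commute)
    moreover have "\<bar>t^2 - u^2\<bar> = \<bar>u^2 - t^2\<bar>" by simp
    ultimately show ?thesis using core_poly[OF assms(1-4) assms(6) assms(5)] assms(1) by (smt (verit) mult_left_mono)
  qed
qed

lemma angle_bounds:
  fixes h th :: real
  assumes "0 < h" "h \<le> pi/2" "h \<le> th" "th \<le> pi - h"
  shows "sin th \<ge> sin h" "cos th \<le> cos h" "cos th \<ge> - cos h"
proof -
  show c1: "cos th \<le> cos h" using assms by (intro cos_monotone_0_pi_le) auto
  have "cos (pi - h) \<le> cos th" using assms by (intro cos_monotone_0_pi_le) auto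
  then show c2: "cos th \<ge> - cos h" by simp
  have "cos h \<ge> 0" using assms by (intro cos_ge_zero) auto
  then have "\<bar>cos th\<bar> \<le> \<bar>cos h\<bar>" using c1 c2 by linarith
  then have "(cos th)^2 \<le> (cos h)^2" by (simp add: abs_le_square_iff)
  then have "(sin h)^2 \<le> (sin th)^2" by (simp add: sin_squared_eq)
  moreover have "sin th \<ge> 0" using assms by (intro sin_ge_zero) auto
  ultimately show "sin th \<ge> sin h" using power2_le_iff_abs_le by fastforce
qed

definition sq2 :: "real^2 \<Rightarrow> real" where "sq2 v = (v$1)^2 + (v$2)^2"
definition cr2 :: "real^2 \<Rightarrow> real^2 \<Rightarrow> real" where "cr2 u v = u$1 * v$2 - u$2 * v$1"

lemma hh_facts:
  fixes n :: nat
  assumes "n \<ge> 1"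
  defines "hh \<equiv> pi / (4 * real n)"
  shows "sin hh > 0" "cos hh > 0" "(cos hh)^2 + (sin hh)^2 = 1" "sin hh \<le> cos hh"
    "sin (2*hh) = 2 * sin hh * cos hh" "cos (2*hh) = (cos hh)^2 - (sin hh)^2"
    "0 < hh" "hh \<le> pi/4"
proof -
  have n: "real n \<ge> 1" using assms by simp
  show h0: "0 < hh" unfolding hh_def using n by simp
  show h1: "hh \<le> pi/4" unfolding hh_def using n pi_gt_zero by (simp add: field_simps)
  show "sin hh > 0" using h0 h1 pi_gt_zero by (intro sin_gt_zero) auto
  show "cos hh > 0" using h0 h1 pi_gt_zero by (intro cos_gt_zero) auto
  show "(cos hh)^2 + (sin hh)^2 = 1" by simp
  show "sin (2*hh) = 2 * sin hh * cos hh" by (rule sin_double)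
  show cd: "cos (2*hh) = (cos hh)^2 - (sin hh)^2" by (rule cos_double)
  have "cos (2*hh) \<ge> 0" using h0 h1 by (intro cos_ge_zero) auto
  then have "(sin hh)^2 \<le> (cos hh)^2" using cd by simp
  moreover have "sin hh > 0" "cos hh > 0" using h0 h1 pi_gt_zero by (auto intro!: sin_gt_zero cos_gt_zero)
  ultimately show "sin hh \<le> cos hh" using power2_le_iff_abs_le by fastforce
qed

lemma poly_param:
  fixes n :: nat and p :: "real^2"
  assumes "n \<ge> 1" "p \<in> regular_polygon (4*n)"
  defines "hh \<equiv> pi / (4 * real n)"
  shows "\<exists>k<4*n. \<exists>t. \<bar>t\<bar> \<le> sin hh \<and>
     p = vector [cos hh * cos ((2*real k+1)*hh) - t * sin ((2*real k+1)*hh),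
                 cos hh * sin ((2*real k+1)*hh) + t * cos ((2*real k+1)*hh)]"
proof -
  obtain k where k: "k < 4*n" "p \<in> closed_segment (reg_vertex (4*n) k) (reg_vertex (4*n) (Suc k))"
    using assms(2) unfolding regular_polygon_def by auto
  then obtain u where u: "0 \<le> u" "u \<le> 1"
    "p = (1-u) *\<^sub>R reg_vertex (4*n) k + u *\<^sub>R reg_vertex (4*n) (Suc k)"
    unfolding closed_segment_def by auto
  define ph where "ph = (2*real k+1)*hh"
  have a1: "2 * pi * real k / real (4*n) = ph - hh" unfolding ph_def hh_def
    using assms(1) by (simp add: field_simps)
  have a2: "2 * pi * real (Suc k) / real (4*n) = ph + hh" unfolding ph_def hh_def
    using assms(1) by (simp add: field_simps)
  define t where "t = (2*u-1) * sin hh"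
  have tb: "\<bar>t\<bar> \<le> sin hh"
  proof -
    have "sin hh \<ge> 0" using hh_facts(1)[OF assms(1)] unfolding hh_def by simp
    moreover have "\<bar>2*u-1\<bar> \<le> 1" using u by auto
    ultimately show ?thesis unfolding t_def by (simp add: abs_mult mult_left_le_one_le)
  qed
  have "p = vector [cos hh * cos ph - t * sin ph, cos hh * sin ph + t * cos ph]"
    unfolding u(3) reg_vertex_def a1 a2 t_def
    by (simp add: vec_eq_iff forall_2 cos_add cos_diff sin_add sin_diff algebra_simps)
  then show ?thesis using k(1) tb unfolding ph_def by blast
qed

lemma G_mid:
  fixes n k :: nat and t u :: real
  assumes "n \<ge> 1" "1 \<le> k" "k < 2*n"
  defines "hh \<equiv> pi / (4 * real n)"
  assumes "\<bar>t\<bar> \<le> sin hh" "\<bar>u\<bar> \<le> sin hh"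
  shows "cos hh * \<bar>t^2 - u^2\<bar> \<le> 2 * sin hh * \<bar>((cos hh)^2 + t*u) * sin (real k * (2*hh))
           + cos hh * (u - t) * cos (real k * (2*hh))\<bar>"
proof -
  note F = hh_facts[OF assms(1), folded hh_def]
  have n: "real n \<ge> 1" using assms by simp
  have kk: "real k \<ge> 1" "real k \<le> 2 * real n - 1" using assms by auto
  have th1: "2*hh \<le> real k * (2*hh)" using kk F(7) by simp
  have "real k * (2*hh) \<le> (2 * real n - 1) * (2*hh)" using kk F(7) by (intro mult_right_mono) auto
  also have "\<dots> = pi - 2*hh" unfolding hh_def using n by (simp add: field_simps)
  finally have th2: "real k * (2*hh) \<le> pi - 2*hh" .
  note B = angle_bounds[of "2*hh" "real k * (2*hh)"]
  have b: "sin (real k * (2*hh)) \<ge> 2 * sin hh * cos hh"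
      "cos (real k * (2*hh)) \<le> (cos hh)^2 - (sin hh)^2"
      "-((cos hh)^2 - (sin hh)^2) \<le> cos (real k * (2*hh))"
    using B F th1 th2 by auto
  have "cos hh * \<bar>t^2 - u^2\<bar> \<le> 2 * sin hh * (((cos hh)^2 + t*u) * sin (real k * (2*hh))
           + cos hh * (u - t) * cos (real k * (2*hh)))"
    by (rule core_G) (use F assms b in auto)
  also have "\<dots> \<le> 2 * sin hh * \<bar>((cos hh)^2 + t*u) * sin (real k * (2*hh))
           + cos hh * (u - t) * cos (real k * (2*hh))\<bar>"
    using F by (intro mult_left_mono) auto
  finally show ?thesis .
qed

lemma G_bound:
  fixes n k :: nat and t u :: real
  assumes "n \<ge> 1" "k < 4*n"
  defines "hh \<equiv> pi / (4 * real n)"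
  assumes "\<bar>t\<bar> \<le> sin hh" "\<bar>u\<bar> \<le> sin hh"
  shows "cos hh * \<bar>t^2 - u^2\<bar> \<le> 2 * sin hh * \<bar>((cos hh)^2 + t*u) * sin (real k * (2*hh))
           + cos hh * (u - t) * cos (real k * (2*hh))\<bar>"
proof -
  note F = hh_facts[OF assms(1), folded hh_def]
  have n: "real n \<ge> 1" using assms by simp
  have pi2: "real (2*n) * (2*hh) = pi" unfolding hh_def using n by (simp add: field_simps)
  have easy: "cos hh * \<bar>t^2 - u^2\<bar> \<le> 2 * sin hh * \<bar>cos hh * (u - t)\<bar>"
  proof -
    have "\<bar>t + u\<bar> \<le> 2 * sin hh" using assms by linarith
    then have "\<bar>t+u\<bar> * \<bar>u - t\<bar> \<le> 2 * sin hh * \<bar>u - t\<bar>" by (intro mult_right_mono) auto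
    moreover have "\<bar>t^2 - u^2\<bar> = \<bar>t+u\<bar> * \<bar>u - t\<bar>"
      by (simp add: power2_eq_square abs_mult[symmetric] algebra_simps)
    ultimately have "\<bar>t^2 - u^2\<bar> \<le> 2 * sin hh * \<bar>u - t\<bar>" by simp
    then have "cos hh * \<bar>t^2 - u^2\<bar> \<le> cos hh * (2 * sin hh * \<bar>u - t\<bar>)" using F by (intro mult_left_mono) auto
    also have "\<dots> = 2 * sin hh * (cos hh * \<bar>u - t\<bar>)" by (simp add: algebra_simps)
    also have "cos hh * \<bar>u - t\<bar> = \<bar>cos hh * (u - t)\<bar>" using F by (simp add: abs_mult)
    finally show ?thesis .
  qed
  consider "k = 0" | "1 \<le> k \<and> k < 2*n" | "k = 2*n" | "2*n < k" by linarith
  then show ?thesis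
  proof cases
    case 1 then show ?thesis using easy by simp
  next
    case 2 then show ?thesis using G_mid[OF assms(1), of k t u] assms unfolding hh_def by auto
  next
    case 3 then have "real k * (2*hh) = pi" using pi2 by simp
    then show ?thesis using easy by simp
  next
    case 4
    define r where "r = k - 2*n"
    have r: "1 \<le> r" "r < 2*n" using 4 assms(2) unfolding r_def by auto
    have "real k * (2*hh) = real r * (2*hh) + pi" using 4 pi2 unfolding r_def
      by (simp add: of_nat_diff algebra_simps)
    then have "sin (real k * (2*hh)) = - sin (real r * (2*hh))" "cos (real k * (2*hh)) = - cos (real r * (2*hh))"
      by (simp_all add: sin_add cos_add)
    then have "((cos hh)^2 + t*u) * sin (real k * (2*hh)) + cos hh * (u - t) * cos (real k * (2*hh))
       = - (((cos hh)^2 + t*u) * sin (real r * (2*hh)) + cos hh * (u - t) * cos (real r * (2*hh)))"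
      by (simp add: algebra_simps)
    then show ?thesis using G_mid[OF assms(1) r, of t u] assms unfolding hh_def
      by (simp only: abs_minus_cancel)
  qed
qed

lemma cross_formula:
  "cr2 (vector [c * cos a - t * sin a, c * sin a + t * cos a])
       (vector [c * cos b - u * sin b, c * sin b + u * cos b])
   = (c^2 + t*u) * sin (b - a) + c * (u - t) * cos (b - a)"
  by (simp add: cr2_def sin_diff cos_diff algebra_simps power2_eq_square)

lemma sq_formula:
  "sq2 (vector [c * cos a - t * sin a, c * sin a + t * cos a]) = c^2 + t^2"
proof -
  have h: "(sin a)^2 + (cos a)^2 = 1" by simp
  show ?thesis unfolding sq2_def vector_2 using h by algebra
qed

lemma poly_sq:
  fixes n :: nat
  assumes "n \<ge> 1" "p \<in> regular_polygon (4*n)"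
  defines "hh \<equiv> pi / (4 * real n)"
  shows "(cos hh)^2 \<le> sq2 p" "sq2 p \<le> 1"
proof -
  note F = hh_facts[OF assms(1), folded hh_def]
  obtain k t where kt: "\<bar>t\<bar> \<le> sin hh"
     "p = vector [cos hh * cos ((2*real k+1)*hh) - t * sin ((2*real k+1)*hh),
                 cos hh * sin ((2*real k+1)*hh) + t * cos ((2*real k+1)*hh)]"
    using poly_param[OF assms(1,2)] unfolding hh_def by blast
  have sp: "sq2 p = (cos hh)^2 + t^2" unfolding kt(2) by (rule sq_formula)
  show "(cos hh)^2 \<le> sq2 p" unfolding sp by simp
  have "t^2 \<le> (sin hh)^2" using kt(1) F by (simp add: abs_le_square_iff[symmetric])
  then show "sq2 p \<le> 1" unfolding sp using F(3) by linarith
qed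

lemma poly_L_aux:
  fixes n k1 k2 :: nat and t u :: real and p q :: "real^2"
  assumes "n \<ge> 1" "k1 \<le> k2" "k2 < 4*n"
  defines "hh \<equiv> pi / (4 * real n)"
  assumes "\<bar>t\<bar> \<le> sin hh" "\<bar>u\<bar> \<le> sin hh"
  assumes "p = vector [cos hh * cos ((2*real k1+1)*hh) - t * sin ((2*real k1+1)*hh),
                 cos hh * sin ((2*real k1+1)*hh) + t * cos ((2*real k1+1)*hh)]"
     "q = vector [cos hh * cos ((2*real k2+1)*hh) - u * sin ((2*real k2+1)*hh),
                 cos hh * sin ((2*real k2+1)*hh) + u * cos ((2*real k2+1)*hh)]"
  shows "cos hh * \<bar>sq2 p - sq2 q\<bar> \<le> 2 * sin hh * \<bar>cr2 p q\<bar>"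
proof -
  have d: "(2*real k2+1)*hh - (2*real k1+1)*hh = real (k2 - k1) * (2*hh)"
    using assms(2) by (simp add: of_nat_diff algebra_simps)
  have "cr2 p q = ((cos hh)^2 + t*u) * sin (real (k2 - k1) * (2*hh))
           + cos hh * (u - t) * cos (real (k2 - k1) * (2*hh))"
    unfolding assms(7,8) cross_formula d[symmetric] by simp
  moreover have "sq2 p - sq2 q = t^2 - u^2" unfolding assms(7,8) sq_formula by simp
  moreover have "k2 - k1 < 4*n" using assms by simp
  ultimately show ?thesis using G_bound[OF assms(1), of "k2-k1" t u] assms(5,6) unfolding hh_def by simp
qed

lemma poly_L:
  fixes n :: nat
  assumes "n \<ge> 1" "p \<in> regular_polygon (4*n)" "q \<in> regular_polygon (4*n)"
  defines "hh \<equiv> pi / (4 * real n)"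
  shows "cos hh * \<bar>sq2 p - sq2 q\<bar> \<le> 2 * sin hh * \<bar>cr2 p q\<bar>"
proof -
  obtain k1 t where kt: "k1 < 4*n" "\<bar>t\<bar> \<le> sin hh"
     "p = vector [cos hh * cos ((2*real k1+1)*hh) - t * sin ((2*real k1+1)*hh),
                 cos hh * sin ((2*real k1+1)*hh) + t * cos ((2*real k1+1)*hh)]"
    using poly_param[OF assms(1,2)] unfolding hh_def by blast
  obtain k2 u where ku: "k2 < 4*n" "\<bar>u\<bar> \<le> sin hh"
     "q = vector [cos hh * cos ((2*real k2+1)*hh) - u * sin ((2*real k2+1)*hh),
                 cos hh * sin ((2*real k2+1)*hh) + u * cos ((2*real k2+1)*hh)]"
    using poly_param[OF assms(1,3)] unfolding hh_def by blast
  show ?thesis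
  proof (cases "k1 \<le> k2")
    case True
    then show ?thesis using poly_L_aux[OF assms(1) True ku(1)] kt ku unfolding hh_def by blast
  next
    case False
    then have "k2 \<le> k1" by simp
    then have "cos hh * \<bar>sq2 q - sq2 p\<bar> \<le> 2 * sin hh * \<bar>cr2 q p\<bar>"
      using poly_L_aux[OF assms(1) \<open>k2 \<le> k1\<close> kt(1)] kt ku unfolding hh_def by blast
    moreover have "\<bar>cr2 q p\<bar> = \<bar>cr2 p q\<bar>" "\<bar>sq2 q - sq2 p\<bar> = \<bar>sq2 p - sq2 q\<bar>"
      by (simp_all add: cr2_def abs_minus_commute mult.commute)
    ultimately show ?thesis by simp
  qed
qed



definition dot2 :: "real^2 \<Rightarrow> real^2 \<Rightarrow> real" where "dot2 u v = u$1 * v$1 + u$2 * v$2"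

lemma sq2_scale: "sq2 (a *\<^sub>R v) = a^2 * sq2 v"
  by (simp add: sq2_def power_mult_distrib algebra_simps)

lemma sq2_nonneg: "sq2 v \<ge> 0" by (simp add: sq2_def)

lemma sq2_zero: "sq2 v = 0 \<longleftrightarrow> v = 0"
  by (simp add: sq2_def vec_eq_iff forall_2 add_nonneg_eq_0_iff)

lemma lagrange: "sq2 a * sq2 b = (dot2 a b)^2 + (cr2 a b)^2"
  by (simp add: sq2_def dot2_def cr2_def power2_eq_square algebra_simps)

lemma dot2_scale: "dot2 (a *\<^sub>R u) v = a * dot2 u v" by (simp add: dot2_def algebra_simps)
lemma cr2_scale: "cr2 (a *\<^sub>R u) v = a * cr2 u v" by (simp add: cr2_def algebra_simps)
lemma cr2_scale2: "cr2 (a *\<^sub>R u) (a *\<^sub>R v) = a^2 * cr2 u v" by (simp add: cr2_def power2_eq_square algebra_simps)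
lemma sq2_pm: "sq2 (Z+X) - sq2 (Z-X) = 4 * dot2 Z X" by (simp add: sq2_def dot2_def power2_eq_square algebra_simps)
lemma cr2_pm: "cr2 (Z+X) (Z-X) = -2 * cr2 Z X" by (simp add: cr2_def algebra_simps)

lemma alg_lower:
  fixes W X :: "real^2" and c s t :: real
  assumes "c > 0" "c^2 + s^2 = 1" "c * \<bar>dot2 W X\<bar> \<le> s * \<bar>cr2 W X\<bar>" "sq2 X > 0"
  shows "sq2 (W + t *\<^sub>R X) \<ge> c^2 * sq2 W"
proof -
  have s0: "s * \<bar>cr2 W X\<bar> \<ge> 0" using assms(1,3) by (smt (verit) mult_nonneg_nonneg abs_ge_zero)
  have "(c * \<bar>dot2 W X\<bar>)^2 \<le> (s * \<bar>cr2 W X\<bar>)^2"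
    using assms(3) assms(1) by (intro power_mono) auto
  then have d: "c^2 * (dot2 W X)^2 \<le> s^2 * (cr2 W X)^2" by (simp add: power_mult_distrib)
  have cr: "cr2 (W + t *\<^sub>R X) X = cr2 W X" by (simp add: cr2_def algebra_simps)
  have "c^2 * sq2 W * sq2 X = c^2 * ((dot2 W X)^2 + (cr2 W X)^2)"
    by (simp only: mult.assoc lagrange)
  also have "\<dots> = c^2 * (dot2 W X)^2 + c^2 * (cr2 W X)^2" by (simp add: distrib_left)
  also have "\<dots> \<le> s^2 * (cr2 W X)^2 + c^2 * (cr2 W X)^2" using d by simp
  also have "\<dots> = (c^2 + s^2) * (cr2 W X)^2" by (simp add: algebra_simps)
  also have "\<dots> = (cr2 W X)^2" using assms(2) by simp
  also have "\<dots> \<le> sq2 (W + t *\<^sub>R X) * sq2 X" unfolding lagrange cr by simp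
  finally have "c^2 * sq2 W * sq2 X \<le> sq2 (W + t *\<^sub>R X) * sq2 X" .
  then show ?thesis using assms(4) by simp
qed

locale polyN =
  fixes n :: nat and N :: "real^2 \<Rightarrow> real" and T :: "real^2 \<Rightarrow> real^2"
  assumes n1: "n \<ge> 1" and nrm: "is_norm N" and lin: "linear T" and bj: "bij T"
    and circ: "unit_circle N = T ` regular_polygon (4*n)"
begin

definition hh where "hh = pi / (4 * real n)"
definition Ti where "Ti = inv T"

lemma F: "sin hh > 0" "cos hh > 0" "(cos hh)^2 + (sin hh)^2 = 1" "sin hh \<le> cos hh"
    "sin (2*hh) = 2 * sin hh * cos hh" "cos (2*hh) = (cos hh)^2 - (sin hh)^2"
    "0 < hh" "hh \<le> pi/4"
  using hh_facts[OF n1] unfolding hh_def by auto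

lemma N0: "N v \<ge> 0" using nrm unfolding is_norm_def by auto
lemma Nz: "N v = 0 \<longleftrightarrow> v = 0" using nrm unfolding is_norm_def by auto
lemma Nsc: "N (a *\<^sub>R v) = \<bar>a\<bar> * N v" using nrm unfolding is_norm_def by auto
lemma Ntri: "N (u + v) \<le> N u + N v" using nrm unfolding is_norm_def by auto
lemma Nneg: "N (- v) = N v" using Nsc[of "-1" v] by simp
lemma Ncomm: "N (a - b) = N (b - a)" using Nneg[of "a - b"] by simp
lemma Ntri_diff: "N (u - v) \<le> N u + N v" using Ntri[of u "-v"] Nneg[of v] by simp

lemma TTi: "T (Ti v) = v" unfolding Ti_def using bj by (simp add: bij_def surj_f_inv_f)
lemma TiT: "Ti (T v) = v" unfolding Ti_def using bj by (simp add: bij_def inv_f_f)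
lemma linTi: "linear Ti" unfolding Ti_def using lin bj by (simp add: bij_def inj_linear_imp_inv_linear)

lemma Ti_add: "Ti (a + b) = Ti a + Ti b" using linTi by (simp add: linear_add)
lemma Ti_diff: "Ti (a - b) = Ti a - Ti b" using linTi by (simp add: linear_diff)
lemma Ti_scale: "Ti (r *\<^sub>R a) = r *\<^sub>R Ti a" using linTi by (simp add: linear_scale)
lemma Ti_0: "Ti 0 = 0" using linTi by (simp add: linear_0)
lemma T_add: "T (a + b) = T a + T b" using lin by (simp add: linear_add)
lemma T_diff: "T (a - b) = T a - T b" using lin by (simp add: linear_diff)
lemma T_scale: "T (r *\<^sub>R a) = r *\<^sub>R T a" using lin by (simp add: linear_scale)

lemma unit_poly: "N v = 1 \<Longrightarrow> Ti v \<in> regular_polygon (4*n)"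
proof -
  assume "N v = 1"
  then have "v \<in> T ` regular_polygon (4*n)" using circ unfolding unit_circle_def by auto
  then show ?thesis using TiT by auto
qed

lemma poly_unit: "p \<in> regular_polygon (4*n) \<Longrightarrow> N (T p) = 1"
  using circ unfolding unit_circle_def by (metis (mono_tags, lifting) image_eqI mem_Collect_eq)

lemma cmp: "(cos hh)^2 * (N v)^2 \<le> sq2 (Ti v)" "sq2 (Ti v) \<le> (N v)^2"
proof -
  have "(cos hh)^2 * (N v)^2 \<le> sq2 (Ti v) \<and> sq2 (Ti v) \<le> (N v)^2"
  proof (cases "v = 0")
    case True then show ?thesis using Ti_0 Nz[of 0] by (simp add: sq2_def)
  next
    case False
    then have pos: "N v > 0" using N0[of v] Nz[of v] by linarith
    define w where "w = (1 / N v) *\<^sub>R v"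
    have "N w = 1" unfolding w_def Nsc using pos by simp
    then have p: "Ti w \<in> regular_polygon (4*n)" by (rule unit_poly)
    have tv: "Ti v = N v *\<^sub>R Ti w" unfolding w_def Ti_scale using pos by simp
    have "sq2 (Ti v) = (N v)^2 * sq2 (Ti w)" unfolding tv sq2_scale ..
    then show ?thesis using poly_sq[OF n1 p] pos unfolding hh_def[symmetric]
      by (simp add: mult_left_mono mult.commute)
  qed
  then show "(cos hh)^2 * (N v)^2 \<le> sq2 (Ti v)" "sq2 (Ti v) \<le> (N v)^2" by auto
qed


lemma bis_eq: "z \<in> bis N (-x) x \<Longrightarrow> N (z + x) = N (z - x)"
  unfolding bis_def by simp

lemma lower:
  assumes x1: "N x = 1" and w: "w \<in> inner_proj N x"
  shows "N (w + t *\<^sub>R x) \<ge> (cos hh)^2"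
proof -
  obtain z where zw: "w = (1 / N z) *\<^sub>R z" and zb: "z \<in> bis N (-x) x" and z0: "z \<noteq> 0"
    using w unfolding inner_proj_def by blast
  have eq: "N (z + x) = N (z - x)" using bis_eq[OF zb] .
  have Nzp: "N z > 0" using N0[of z] Nz[of z] z0 by linarith
  define r where "r = N (z + x)"
  have r0: "r > 0"
  proof (rule ccontr)
    assume "\<not> r > 0"
    then have "r = 0" using N0[of "z+x"] unfolding r_def by linarith
    then have "z + x = 0" "z - x = 0" using Nz[of "z+x"] Nz[of "z-x"] eq unfolding r_def by auto
    then have "(z + x) - (z - x) = 0" by simp
    then have "2 *\<^sub>R x = 0" by (simp add: scaleR_2)
    then have "x = 0" by simp
    then show False using x1 Nz[of 0] by auto
  qed
  define Z where "Z = Ti z"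
  define X where "X = Ti x"
  have pa: "Ti ((1/r) *\<^sub>R (z + x)) \<in> regular_polygon (4*n)"
    by (rule unit_poly) (use r0 in \<open>simp add: Nsc r_def\<close>)
  have pb: "Ti ((1/r) *\<^sub>R (z - x)) \<in> regular_polygon (4*n)"
    by (rule unit_poly) (use r0 eq in \<open>simp add: Nsc r_def\<close>)
  have pa': "Ti ((1/r) *\<^sub>R (z + x)) = (1/r) *\<^sub>R (Z + X)" unfolding Z_def X_def by (simp add: Ti_scale Ti_add)
  have pb': "Ti ((1/r) *\<^sub>R (z - x)) = (1/r) *\<^sub>R (Z - X)" unfolding Z_def X_def by (simp add: Ti_scale Ti_diff)
  have L: "cos hh * \<bar>sq2 ((1/r) *\<^sub>R (Z + X)) - sq2 ((1/r) *\<^sub>R (Z - X))\<bar>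
      \<le> 2 * sin hh * \<bar>cr2 ((1/r) *\<^sub>R (Z + X)) ((1/r) *\<^sub>R (Z - X))\<bar>"
    using poly_L[OF n1 pa pb] unfolding pa' pb' hh_def .
  have e1: "sq2 ((1/r) *\<^sub>R (Z + X)) - sq2 ((1/r) *\<^sub>R (Z - X)) = (1/r)^2 * (4 * dot2 Z X)"
    unfolding sq2_scale sq2_pm[symmetric] by (simp add: right_diff_distrib)
  have e2: "cr2 ((1/r) *\<^sub>R (Z + X)) ((1/r) *\<^sub>R (Z - X)) = (1/r)^2 * (-2 * cr2 Z X)"
    unfolding cr2_scale2 cr2_pm ..
  define k where "k = (1/r)^2"
  have kp: "k > 0" using r0 unfolding k_def by simp
  have "cos hh * (k * (4 * \<bar>dot2 Z X\<bar>)) \<le> 2 * sin hh * (k * (2 * \<bar>cr2 Z X\<bar>))"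
    using L unfolding e1 e2 k_def[symmetric] using kp by (simp add: abs_mult)
  then have "(4 * k) * (cos hh * \<bar>dot2 Z X\<bar>) \<le> (4 * k) * (sin hh * \<bar>cr2 Z X\<bar>)"
    by (simp add: algebra_simps)
  then have dZ: "cos hh * \<bar>dot2 Z X\<bar> \<le> sin hh * \<bar>cr2 Z X\<bar>" using kp by simp
  define W where "W = Ti w"
  have WZ: "W = (1 / N z) *\<^sub>R Z" unfolding W_def Z_def zw Ti_scale ..
  have "cos hh * \<bar>dot2 W X\<bar> = (1 / N z) * (cos hh * \<bar>dot2 Z X\<bar>)"
    unfolding WZ dot2_scale using Nzp by (simp add: abs_mult)
  also have "\<dots> \<le> (1 / N z) * (sin hh * \<bar>cr2 Z X\<bar>)" using dZ Nzp by (intro mult_left_mono) auto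
  also have "\<dots> = sin hh * \<bar>cr2 W X\<bar>"
    unfolding WZ cr2_scale using Nzp by (simp add: abs_mult)
  finally have dW: "cos hh * \<bar>dot2 W X\<bar> \<le> sin hh * \<bar>cr2 W X\<bar>" .
  have sX: "sq2 X > 0"
  proof -
    have "(cos hh)^2 * (N x)^2 \<le> sq2 X" using cmp(1)[of x] unfolding X_def .
    then have "(cos hh)^2 \<le> sq2 X" using x1 by simp
    moreover have "(cos hh)^2 > 0" using F by simp
    ultimately show ?thesis by linarith
  qed
  have Nw: "N w = 1" unfolding zw Nsc using Nzp by simp
  have A: "sq2 (W + t *\<^sub>R X) \<ge> (cos hh)^2 * sq2 W"
    by (rule alg_lower) (use F dW sX in auto)
  have B: "sq2 W \<ge> (cos hh)^2" using cmp(1)[of w] Nw unfolding W_def by simp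
  have "((cos hh)^2)^2 = (cos hh)^2 * (cos hh)^2" by (simp add: power2_eq_square)
  also have "\<dots> \<le> (cos hh)^2 * sq2 W" using B by (intro mult_left_mono) auto
  also have "\<dots> \<le> sq2 (W + t *\<^sub>R X)" using A .
  also have "W + t *\<^sub>R X = Ti (w + t *\<^sub>R x)" unfolding W_def X_def by (simp add: Ti_add Ti_scale)
  also have "sq2 (Ti (w + t *\<^sub>R x)) \<le> (N (w + t *\<^sub>R x))^2" by (rule cmp(2))
  finally have sq: "((cos hh)^2)^2 \<le> (N (w + t *\<^sub>R x))^2" .
  show ?thesis by (rule power2_le_imp_le[OF sq N0])
qed


lemma N_bound: "N v \<le> (N (axis 1 1) + N (axis 2 1)) * norm v"
proof -
  have v: "v = v$1 *\<^sub>R axis 1 1 + v$2 *\<^sub>R axis 2 1"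
    by (simp add: vec_eq_iff forall_2 axis_def)
  have "N v \<le> N (v$1 *\<^sub>R axis 1 1) + N (v$2 *\<^sub>R axis 2 1)" using Ntri by (subst v) 
  also have "\<dots> = \<bar>v$1\<bar> * N (axis 1 1) + \<bar>v$2\<bar> * N (axis 2 1)" by (simp add: Nsc)
  also have "\<dots> \<le> norm v * N (axis 1 1) + norm v * N (axis 2 1)"
    using N0[of "axis 1 1"] N0[of "axis 2 1"] component_le_norm_cart[of v 1] component_le_norm_cart[of v 2]
    by (intro add_mono mult_right_mono) auto
  finally show ?thesis by (simp add: algebra_simps)
qed

lemma N_cont: "continuous_on S N"
proof -
  define K where "K = N (axis 1 1) + N (axis 2 1)"
  have K0: "K \<ge> 0" unfolding K_def using N0[of "axis 1 1"] N0[of "axis 2 1"] by linarith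
  have "K-lipschitz_on S N"
  proof (rule lipschitz_onI[OF _ K0])
    fix u v
    have "N u \<le> N v + N (u - v)" using Ntri[of v "u - v"] by simp
    moreover have "N v \<le> N u + N (u - v)" using Ntri[of u "v - u"] Ncomm[of u v] by simp
    moreover have "N (u - v) \<le> K * norm (u - v)" unfolding K_def by (rule N_bound)
    ultimately show "dist (N u) (N v) \<le> K * dist u v" by (simp add: dist_real_def dist_norm abs_le_iff)
  qed
  then show ?thesis by (rule lipschitz_on_continuous_on)
qed

definition rot :: "real^2 \<Rightarrow> real^2" where "rot v = vector [- v$2, v$1]"

lemma sq2_rotcomb: "sq2 (a *\<^sub>R X + b *\<^sub>R rot X) = (a^2 + b^2) * sq2 X"
  by (simp add: sq2_def rot_def power2_eq_square algebra_simps)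

lemma nonempty:
  assumes x1: "N x = 1"
  shows "inner_proj N x \<noteq> {}"
proof -
  define c where "c = cos hh"
  have c0: "c > 0" "c \<le> 1" unfolding c_def using F by auto
  define X where "X = Ti x"
  define y where "y = T (rot X)"
  define g where "g = (\<lambda>th::real. c *\<^sub>R (cos th *\<^sub>R x + sin th *\<^sub>R y))"
  define f where "f = (\<lambda>th. N (g th + x) - N (g th - x))"
  have gc: "continuous_on {0..pi} g" unfolding g_def by (intro continuous_intros)
  have "continuous_on {0..pi} (\<lambda>th. N (g th + x))"
    by (rule continuous_on_compose2[OF N_cont]) (use gc in \<open>auto intro!: continuous_intros\<close>)
  moreover have "continuous_on {0..pi} (\<lambda>th. N (g th - x))"
    by (rule continuous_on_compose2[OF N_cont]) (use gc in \<open>auto intro!: continuous_intros\<close>)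
  ultimately have fc: "continuous_on {0..pi} f" unfolding f_def by (intro continuous_intros)
  have f0: "f 0 = 2 * c"
  proof -
    have "g 0 + x = (c + 1) *\<^sub>R x" "g 0 - x = - ((1 - c) *\<^sub>R x)" unfolding g_def by (simp_all add: algebra_simps)
    then show ?thesis unfolding f_def using c0 x1 by (simp add: Nsc Nneg)
  qed
  have fpi: "f pi = - 2 * c"
  proof -
    have "g pi + x = (1 - c) *\<^sub>R x" "g pi - x = - ((1 + c) *\<^sub>R x)" unfolding g_def by (simp_all add: algebra_simps)
    then show ?thesis unfolding f_def using c0 x1 by (simp add: Nsc Nneg)
  qed
  obtain th where th: "0 \<le> th" "th \<le> pi" "f th = 0"
    using IVT2'[where f=f and a=0 and b=pi and y=0] fc f0 fpi c0 pi_gt_zero by auto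
  define z where "z = g th"
  have zb: "z \<in> bis N (-x) x" using th(3) unfolding bis_def f_def z_def by simp
  have Tiz: "Ti z = c *\<^sub>R (cos th *\<^sub>R X + sin th *\<^sub>R rot X)"
    unfolding z_def g_def y_def X_def by (simp add: Ti_add Ti_scale TiT)
  have sz: "sq2 (Ti z) = c^2 * sq2 X" unfolding Tiz sq2_scale sq2_rotcomb by simp
  have sX: "c^2 \<le> sq2 X" "sq2 X \<le> 1" using cmp[of x] x1 unfolding X_def c_def by auto
  have "c^2 * sq2 X \<le> c^2 * 1" using sX by (intro mult_left_mono) auto
  then have "c^2 * (N z)^2 \<le> c^2 * 1" using cmp(1)[of z] sz unfolding c_def by linarith
  then have "(N z)^2 \<le> 1^2" using c0 by simp
  then have Nz1: "N z \<le> 1" by (rule power2_le_imp_le) simp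
  have "c^2 > 0" using c0 by simp
  then have "sq2 X > 0" using sX by linarith
  then have "sq2 (Ti z) > 0" unfolding sz using \<open>c^2 > 0\<close> by simp
  moreover have "sq2 (Ti 0) = 0" unfolding Ti_0 sq2_def by simp
  ultimately have z0: "z \<noteq> 0" by auto
  have "(1 / N z) *\<^sub>R z \<in> inner_proj N x"
    unfolding inner_proj_def using zb Nz1 z0 unfolding unit_ball_def by blast
  then show ?thesis by blast
qed


lemma seg_in: "k < 4*n \<Longrightarrow> 0 \<le> u \<Longrightarrow> u \<le> 1 \<Longrightarrow>
   (1-u) *\<^sub>R reg_vertex (4*n) k + u *\<^sub>R reg_vertex (4*n) (Suc k) \<in> regular_polygon (4*n)"
  unfolding regular_polygon_def closed_segment_def by blast

lemma upper:
  assumes e: "e > 0"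
  shows "\<exists>x. N x = 1 \<and> (\<exists>w\<in>inner_proj N x. \<exists>t. N (w + t *\<^sub>R x) \<le> (cos hh)^2 + e)"
proof -
  define c where "c = cos hh"
  define s where "s = sin hh"
  have cs: "c > 0" "s > 0" "c^2 + s^2 = 1" "s \<le> c" unfolding c_def s_def using F by auto
  have nn: "real n \<ge> 1" using n1 by simp
  have a0: "2 * pi * real 1 / real (4*n) = 2*hh" unfolding hh_def by simp
  have an: "2 * pi * real n / real (4*n) = pi/2" using nn by simp
  have an1: "2 * pi * real (Suc n) / real (4*n) = pi/2 + 2*hh" unfolding hh_def using nn by (simp add: field_simps)
  have V0: "reg_vertex (4*n) 0 = vector [1, 0]" unfolding reg_vertex_def by simp
  have V1: "reg_vertex (4*n) (Suc 0) = vector [c^2 - s^2, 2* s*c]"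
    unfolding reg_vertex_def One_nat_def[symmetric] a0 c_def s_def using F by simp
  have Vn: "reg_vertex (4*n) n = vector [0, 1]" unfolding reg_vertex_def an by simp
  have Vn1: "reg_vertex (4*n) (Suc n) = vector [- (2* s*c), c^2 - s^2]"
    unfolding reg_vertex_def an1 c_def s_def using F by (simp add: cos_add sin_add)
  define M where "M = (vector [- (s*c), c^2] :: real^2)"
  have M_in: "M \<in> regular_polygon (4*n)"
  proof -
    have "(1 - 1/2) *\<^sub>R reg_vertex (4*n) n + (1/2) *\<^sub>R reg_vertex (4*n) (Suc n) = M"
      unfolding Vn Vn1 M_def using cs(3) by (simp add: vec_eq_iff forall_2 field_simps)
    moreover have "n < 4*n" using n1 by simp
    ultimately show ?thesis using seg_in[of n "1/2"] by auto
  qed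
  have Vn_in: "vector [0, 1] \<in> regular_polygon (4*n)"
    using seg_in[of n 0] n1 Vn by simp
  define sg where "sg = min (1/2) (e/2)"
  have sg: "0 < sg" "sg \<le> 1/2" "sg \<le> e/2" unfolding sg_def using e by auto
  define x0 where "x0 = (vector [1 - 2* sg* s^2, 2* sg* s*c] :: real^2)"
  have pin: "\<And>u. 0 \<le> u \<Longrightarrow> u \<le> 1 \<Longrightarrow> (vector [1 - 2*u* s^2, 2*u* s*c] :: real^2) \<in> regular_polygon (4*n)"
  proof -
    fix u :: real assume u: "0 \<le> u" "u \<le> 1"
    have "(1-u) *\<^sub>R reg_vertex (4*n) 0 + u *\<^sub>R reg_vertex (4*n) (Suc 0) = (vector [1 - 2*u* s^2, 2*u* s*c] :: real^2)"
      unfolding V0 V1 using cs(3) by (simp add: vec_eq_iff forall_2 algebra_simps power2_eq_square; algebra)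
    then show "(vector [1 - 2*u* s^2, 2*u* s*c] :: real^2) \<in> regular_polygon (4*n)"
      using seg_in[of 0 u] n1 u by auto
  qed
  define z0 where "z0 = (sg * s / c) *\<^sub>R M"
  have x0in: "x0 \<in> regular_polygon (4*n)" unfolding x0_def by (rule pin) (use sg in auto)
  have p1: "x0 + z0 = vector [1 - 2*(3* sg/2)* s^2, 2*(3* sg/2)* s*c]"
    unfolding x0_def z0_def M_def using cs(1,3) by (simp add: vec_eq_iff forall_2 field_simps power2_eq_square; algebra)
  have p2: "x0 - z0 = vector [1 - 2*(sg/2)* s^2, 2*(sg/2)* s*c]"
    unfolding x0_def z0_def M_def using cs(1,3) by (simp add: vec_eq_iff forall_2 field_simps power2_eq_square; algebra)
  have p1in: "x0 + z0 \<in> regular_polygon (4*n)" unfolding p1 by (rule pin) (use sg in auto)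
  have p2in: "x0 - z0 \<in> regular_polygon (4*n)" unfolding p2 by (rule pin) (use sg in auto)
  define x where "x = T x0"
  define z where "z = T z0"
  have Nx: "N x = 1" unfolding x_def by (rule poly_unit[OF x0in])
  have Nzx1: "N (z + x) = 1" unfolding x_def z_def T_add[symmetric] using poly_unit[OF p1in] by (simp add: add.commute)
  have Nzx2: "N (z - x) = 1" unfolding x_def z_def T_diff[symmetric] using poly_unit[OF p2in] Ncomm
    by (metis T_diff)
  have NM: "N (T M) = 1" by (rule poly_unit[OF M_in])
  have kpos: "sg * s / c > 0" using sg cs by simp
  have Nz: "N z = sg * s / c" unfolding z_def z0_def T_scale Nsc NM using sg(1) cs(1,2) by (simp add: abs_mult)
  have Nz_le: "N z \<le> 1"
  proof -
    have "s / c \<le> 1" using cs by simp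
    then have "sg * (s / c) \<le> 1/2 * 1" using sg cs by (intro mult_mono) auto
    moreover have "sg * s / c = sg * (s / c)" by simp
    ultimately show ?thesis unfolding Nz by linarith
  qed
  have N00: "N 0 = 0" using Nsc[of 0 0] by simp
  have z0': "z \<noteq> 0" using Nz kpos N00 by auto
  have zb: "z \<in> bis N (-x) x" unfolding bis_def using Nzx1 Nzx2 by simp
  have win: "(1 / N z) *\<^sub>R z \<in> inner_proj N x"
    unfolding inner_proj_def unit_ball_def using zb Nz_le z0' by blast
  have wM: "(1 / N z) *\<^sub>R z = T M" unfolding Nz unfolding z_def z0_def T_scale using sg(1) cs(1,2) by simp
  have decomp: "M + (c* s) *\<^sub>R x0 = c^2 *\<^sub>R vector [0, 1] + (2 * s^2 * sg) *\<^sub>R M"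
    unfolding x0_def M_def by (simp add: vec_eq_iff forall_2 algebra_simps power2_eq_square)
  have "N ((1 / N z) *\<^sub>R z + (c* s) *\<^sub>R x) = N (T (M + (c* s) *\<^sub>R x0))"
    unfolding wM x_def T_add T_scale ..
  also have "\<dots> = N (c^2 *\<^sub>R T (vector [0, 1]) + (2 * s^2 * sg) *\<^sub>R T M)"
    unfolding decomp T_add T_scale ..
  also have "\<dots> \<le> N (c^2 *\<^sub>R T (vector [0, 1])) + N ((2 * s^2 * sg) *\<^sub>R T M)" by (rule Ntri)
  also have "\<dots> = c^2 + 2 * s^2 * sg" unfolding Nsc NM poly_unit[OF Vn_in] using sg by simp
  also have "\<dots> \<le> c^2 + e"
  proof -
    have "c^2 \<ge> 0" by simp
    then have "s^2 \<le> 1" using cs(3) by linarith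
    then have "2 * s^2 * sg \<le> 2 * 1 * (e/2)" using sg by (intro mult_mono) auto
    then show ?thesis by simp
  qed
  finally show ?thesis using Nx win unfolding c_def by blast
qed

end

theorem proposition4p3:
  fixes n :: nat and N :: "real^2 \<Rightarrow> real"
  assumes "n \<ge> 1"
    and "is_norm N"
    and "affine_regular_polygon (4 * n) (unit_circle N)"
  shows "c_B N = (cos (pi / (4 * real n)))^2"
proof -
  obtain T where T: "linear T" "bij T" "unit_circle N = T ` regular_polygon (4*n)"
    using assms(3) unfolding affine_regular_polygon_def by blast
  interpret P: polyN n N T
    by (rule polyN.intro[OF assms(1,2) T])
  define C where "C = (cos (pi / (4 * real n)))^2"
  have C: "C = (cos P.hh)^2" unfolding C_def P.hh_def ..
  define G where "G = (\<lambda>x. INF w\<in>inner_proj N x. sine_fn N w x)"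
  have cB: "c_B N = (INF x\<in>unit_circle N. G x)" unfolding c_B_def G_def ..
  have bdd_t: "bdd_below (range (\<lambda>t. N (w + t *\<^sub>R x)))" for w x
    by (rule bdd_belowI[of _ 0]) (use P.N0 in auto)
  have sine_ge: "sine_fn N w x \<ge> C" if "N x = 1" "w \<in> inner_proj N x" for w x
    unfolding sine_fn_def C by (rule cINF_greatest) (use P.lower[OF that] in auto)
  have G_ge: "G x \<ge> C" if "x \<in> unit_circle N" for x
  proof -
    have x1: "N x = 1" using that unfolding unit_circle_def by simp
    show ?thesis unfolding G_def
      by (rule cINF_greatest) (use P.nonempty[OF x1] sine_ge[OF x1] in auto)
  qed
  have ub: "c_B N \<le> C + e" if e: "e > 0" for e
  proof -
    obtain x w t where x1: "N x = 1" and w: "w \<in> inner_proj N x"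
        and le: "N (w + t *\<^sub>R x) \<le> C + e"
      using P.upper[OF e] unfolding C by blast
    have xS: "x \<in> unit_circle N" using x1 unfolding unit_circle_def by simp
    have "c_B N \<le> G x" unfolding cB
      by (rule cINF_lower[OF _ xS]) (rule bdd_belowI[of _ C], use G_ge in auto)
    also have "G x \<le> sine_fn N w x" unfolding G_def
      by (rule cINF_lower[OF _ w]) (rule bdd_belowI[of _ C], use sine_ge[OF x1] in auto)
    also have "sine_fn N w x \<le> N (w + t *\<^sub>R x)" unfolding sine_fn_def
      by (rule cINF_lower[OF bdd_t]) simp
    finally show ?thesis using le by linarith
  qed
  have lb: "c_B N \<ge> C"
  proof -
    obtain x w t where x1: "N x = 1"
      using P.upper[of 1] by auto
    have "unit_circle N \<noteq> {}" using x1 unfolding unit_circle_def by auto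
    then show ?thesis unfolding cB by (rule cINF_greatest) (use G_ge in auto)
  qed
  have "c_B N \<le> C" by (rule field_le_epsilon) (use ub in auto)
  then show ?thesis using lb unfolding C_def by linarith
qed

end
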